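(* Consider a finite-horizon tabular MDP with stationary transition kernel $P$, $S$ states, $A$ actions, horizon $H$. Fix $t\in[H]$ and $u>0$. Let $\mathcal D_2$ consist of $l$ i.i.d. episodes from behavior policy $\mu$, and let $V_{t+1},V^{\rm in}_{t+1}:\mathcal S\to\mathbb R$ be fixed (not depending on $\mathcal D_2$) with $\|V_{t+1}-V^{\rm in}_{t+1}\|_\infty\le2u$. Let $n'_{s,a}=\sum_{j=1}^l\sum_{v=1}^H\mathbf 1[s'^{(j)}_v=s,a'^{(j)}_v=a]$, $f(s,a)=4u\sqrt{\log(2HSA/\delta)/(l\sum_{t=1}^Hd^\mu_t(s,a))}$, and define $g_t(s,a)=P(\cdot|s,a)^\top[V_{t+1}-V^{\rm in}_{t+1}]-f(s,a)$ if $n'_{s,a}\le\frac12l\sum_{t=1}^Hd^\mu_t(s,a)$, and otherwise \[ g_t(s,a)=\frac1{n'_{s,a}}\sum_{j=1}^l\sum_{v=1}^H[V_{t+1}(s'^{(j)}_{v+1})-V^{\rm in}_{t+1}(s'^{(j)}_{v+1})]\mathbf 1[s'^{(j)}_v=s,a'^{(j)}_v=a]-f(s,a). \] Then with probability at least $1-\delta/H$, for all $(s,a)$ with $\sum_td^\mu_t(s,a)>0$, \[ 0\le P(\cdot|s,a)^\top[V_{t+1}-V^{\rm in}_{t+1}]-g_t(s,a)\le8u\sqrt{\frac{\log(2HSA/\delta)}{l\sum_{t=1}^Hd^\mu_t(s,a)}}. \]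
   Context: Episodes: $s_1\sim d_1$, $a_v\sim\mu_v(\cdot|s_v)$, $s_{v+1}\sim P(\cdot|s_v,a_v)$; $(s'^{(j)}_v,a'^{(j)}_v)$ denote the $j$-th episode of $\mathcal D_2$. $d^\mu_t(s,a)=\mathbb P^\mu(s_t=s,a_t=a)$. $\delta\in(0,1)$. *)

theory Defs
  imports "HOL-Probability.Probability"
begin

text \<open>An episode of horizon H is represented as a pair (tr, sf) where tr is the list
  [(s_1,a_1),...,(s_H,a_H)] and sf = s_{H+1} is the final state.\<close>

fun gen_traj :: "(nat \<Rightarrow> 's \<Rightarrow> 'a pmf) \<Rightarrow> ('s \<Rightarrow> 'a \<Rightarrow> 's pmf) \<Rightarrow> nat \<Rightarrow> nat \<Rightarrow> 's
                  \<Rightarrow> (('s \<times> 'a) list \<times> 's) pmf" where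
  "gen_traj \<mu> P v 0 s = return_pmf ([], s)"
| "gen_traj \<mu> P v (Suc k) s =
     bind_pmf (\<mu> v s) (\<lambda>a. bind_pmf (P s a) (\<lambda>s'.
       map_pmf (\<lambda>(tr, sf). ((s, a) # tr, sf)) (gen_traj \<mu> P (Suc v) k s')))"

definition episode_pmf :: "'s pmf \<Rightarrow> (nat \<Rightarrow> 's \<Rightarrow> 'a pmf) \<Rightarrow> ('s \<Rightarrow> 'a \<Rightarrow> 's pmf) \<Rightarrow> nat
                           \<Rightarrow> (('s \<times> 'a) list \<times> 's) pmf" where
  "episode_pmf d1 \<mu> P H = bind_pmf d1 (\<lambda>s. gen_traj \<mu> P 1 H s)"

text \<open>State s_v (1 \<le> v \<le> H+1) and action a_v (1 \<le> v \<le> H) of an episode.\<close>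
definition ep_s :: "(('s \<times> 'a) list \<times> 's) \<Rightarrow> nat \<Rightarrow> 's" where
  "ep_s e v = (if v \<le> length (fst e) then fst (fst e ! (v - 1)) else snd e)"

definition ep_a :: "(('s \<times> 'a) list \<times> 's) \<Rightarrow> nat \<Rightarrow> 'a" where
  "ep_a e v = snd (fst e ! (v - 1))"

definition occ :: "'s pmf \<Rightarrow> (nat \<Rightarrow> 's \<Rightarrow> 'a pmf) \<Rightarrow> ('s \<Rightarrow> 'a \<Rightarrow> 's pmf) \<Rightarrow> nat
                   \<Rightarrow> nat \<Rightarrow> 's \<Rightarrow> 'a \<Rightarrow> real" where
  "occ d1 \<mu> P H t s a =
     measure_pmf.prob (episode_pmf d1 \<mu> P H) {e. ep_s e t = s \<and> ep_a e t = a}"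

definition dataset_pmf :: "nat \<Rightarrow> 's pmf \<Rightarrow> (nat \<Rightarrow> 's \<Rightarrow> 'a pmf) \<Rightarrow> ('s \<Rightarrow> 'a \<Rightarrow> 's pmf) \<Rightarrow> nat
                           \<Rightarrow> (nat \<Rightarrow> (('s \<times> 'a) list \<times> 's)) pmf" where
  "dataset_pmf l d1 \<mu> P H = Pi_pmf {1..l} undefined (\<lambda>_. episode_pmf d1 \<mu> P H)"

definition visit_count :: "nat \<Rightarrow> nat \<Rightarrow> (nat \<Rightarrow> (('s \<times> 'a) list \<times> 's)) \<Rightarrow> 's \<Rightarrow> 'a \<Rightarrow> real" where
  "visit_count l H D s a =
     (\<Sum>j\<in>{1..l}. \<Sum>v\<in>{1..H}. if ep_s (D j) v = s \<and> ep_a (D j) v = a then 1 else 0)"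

definition occ_total :: "'s pmf \<Rightarrow> (nat \<Rightarrow> 's \<Rightarrow> 'a pmf) \<Rightarrow> ('s \<Rightarrow> 'a \<Rightarrow> 's pmf) \<Rightarrow> nat
                         \<Rightarrow> 's \<Rightarrow> 'a \<Rightarrow> real" where
  "occ_total d1 \<mu> P H s a = (\<Sum>t'\<in>{1..H}. occ d1 \<mu> P H t' s a)"

definition PV_diff :: "('s \<Rightarrow> 'a \<Rightarrow> 's pmf) \<Rightarrow> ('s \<Rightarrow> real) \<Rightarrow> ('s \<Rightarrow> real) \<Rightarrow> 's \<Rightarrow> 'a \<Rightarrow> real" where
  "PV_diff P V Vin s a = measure_pmf.expectation (P s a) (\<lambda>s'. V s' - Vin s')"

end

theory Submission
  imports Defs
begin

lemma hoeff_step: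
  fixes p :: "'s pmf" and Y :: "'s \<Rightarrow> real"
  assumes "\<And>x. Y x \<in> {a..b}" "lam > 0"
  shows "nn_integral p (\<lambda>x. ennreal (exp (lam * (Y x - measure_pmf.expectation p Y))))
           \<le> ennreal (exp (lam\<^sup>2 * (b-a)\<^sup>2/8))"
proof -
  interpret interval_bounded_random_variable "measure_pmf p" Y a b
    proof unfold_locales
    show "AE x in measure_pmf p. Y x \<in> {a..b}" by (intro AE_pmfI assms(1))
  qed simp
  show ?thesis by (rule Hoeffdings_lemma_nn_integral) fact
qed

lemma gen_traj_support:
  "e \<in> set_pmf (gen_traj \<mu> P v k s0) \<Longrightarrow> length (fst e) = k \<and> ep_s e 1 = s0"
proof (induction k arbitrary: v s0 e)
  case 0 then show ?case by (auto simp: ep_s_def)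
next
  case (Suc k)
  then show ?case by (auto simp: ep_s_def)
qed

lemma ep_shift:
  assumes "i \<ge> 1"
  shows "ep_s ((x # tr), sf) (Suc i) = ep_s (tr, sf) i" "ep_a ((x # tr), sf) (Suc i) = ep_a (tr, sf) i"
  using assms by (auto simp: ep_s_def ep_a_def)

lemma sum_shift1: "(\<Sum>i\<in>{1..Suc k}. h i) = h 1 + (\<Sum>i\<in>{1..k}. h (Suc i))"
proof -
  have "sum h {1..Suc k} = h 1 + sum h {Suc 1..Suc k}" by (rule sum.atLeast_Suc_atMost) simp
  also have "sum h {Suc 1..Suc k} = (\<Sum>i=1..k. h (Suc i))" by (rule sum.shift_bounds_cl_Suc_ivl)
  finally show ?thesis .
qed

lemma sum_cons:
  "(\<Sum>i\<in>{1..Suc k}. G (ep_s ((x,y)#tr, sf) i) (ep_a ((x,y)#tr,sf) i) (ep_s ((x,y)#tr,sf) (Suc i)))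
   = G x y (ep_s (tr,sf) 1) + (\<Sum>i\<in>{1..k}. G (ep_s (tr,sf) i) (ep_a (tr,sf) i) (ep_s (tr,sf) (Suc i)))"
proof -
  have a: "ep_s ((x,y)#tr, sf) 1 = x" "ep_a ((x,y)#tr, sf) 1 = y" "ep_s ((x,y)#tr, sf) (Suc 1) = ep_s (tr,sf) 1"
    by (auto simp: ep_s_def ep_a_def)
  have b: "(\<Sum>i\<in>{1..k}. G (ep_s ((x,y)#tr, sf) (Suc i)) (ep_a ((x,y)#tr,sf) (Suc i)) (ep_s ((x,y)#tr,sf) (Suc (Suc i))))
     = (\<Sum>i\<in>{1..k}. G (ep_s (tr,sf) i) (ep_a (tr,sf) i) (ep_s (tr,sf) (Suc i)))"
    by (intro sum.cong refl) (auto simp: ep_shift)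
  show ?thesis unfolding sum_shift1 a b ..
qed

lemma gen_traj_exp:
  fixes P :: "'s \<Rightarrow> 'a \<Rightarrow> 's pmf" and \<mu> :: "nat \<Rightarrow> 's \<Rightarrow> 'a pmf"
  assumes G: "\<And>s a. nn_integral (measure_pmf (P s a)) (\<lambda>s'. ennreal (exp (G s a s'))) \<le> 1"
  shows "nn_integral (gen_traj \<mu> P v k s0)
     (\<lambda>e. ennreal (exp (\<Sum>i\<in>{1..k}. G (ep_s e i) (ep_a e i) (ep_s e (Suc i))))) \<le> 1"
proof (induction k arbitrary: v s0)
  case 0
  then show ?case by simp
next
  case (Suc k)
  define F where "F = (\<lambda>e. ennreal (exp (\<Sum>i\<in>{1..k}. G (ep_s e i) (ep_a e i) (ep_s e (Suc i)))))"
  have inner: "(\<integral>\<^sup>+e. ennreal (exp (\<Sum>i\<in>{1..Suc k}. G (ep_s ((s0,a) # fst e, snd e) i)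
        (ep_a ((s0,a) # fst e, snd e) i) (ep_s ((s0,a) # fst e, snd e) (Suc i)))) \<partial>gen_traj \<mu> P (Suc v) k s')
       \<le> ennreal (exp (G s0 a s'))" for a s'
  proof -
    have "(\<integral>\<^sup>+e. ennreal (exp (\<Sum>i\<in>{1..Suc k}. G (ep_s ((s0,a) # fst e, snd e) i)
        (ep_a ((s0,a) # fst e, snd e) i) (ep_s ((s0,a) # fst e, snd e) (Suc i)))) \<partial>gen_traj \<mu> P (Suc v) k s')
      = (\<integral>\<^sup>+e. ennreal (exp (G s0 a s')) * F e \<partial>gen_traj \<mu> P (Suc v) k s')"
    proof (intro nn_integral_cong_AE AE_pmfI)
      fix e assume e: "e \<in> set_pmf (gen_traj \<mu> P (Suc v) k s')"
      obtain tr sf where esplit: "e = (tr, sf)" by (cases e)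
      have "ep_s (tr, sf) 1 = s'"
        using gen_traj_support[OF e] esplit by simp
      then show "ennreal (exp (\<Sum>i\<in>{1..Suc k}. G (ep_s ((s0,a) # fst e, snd e) i)
        (ep_a ((s0,a) # fst e, snd e) i) (ep_s ((s0,a) # fst e, snd e) (Suc i))))
         = ennreal (exp (G s0 a s')) * F e"
        unfolding F_def esplit fst_conv snd_conv sum_cons
        by (simp add: exp_add ennreal_mult)
    qed
    also have "\<dots> = ennreal (exp (G s0 a s')) * (\<integral>\<^sup>+e. F e \<partial>gen_traj \<mu> P (Suc v) k s')"
      by (rule nn_integral_cmult) simp
    also have "\<dots> \<le> ennreal (exp (G s0 a s')) * 1"
      by (intro mult_left_mono) (use Suc.IH in \<open>auto simp: F_def\<close>)
    finally show ?thesis by simp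
  qed
  have "nn_integral (gen_traj \<mu> P v (Suc k) s0)
     (\<lambda>e. ennreal (exp (\<Sum>i\<in>{1..Suc k}. G (ep_s e i) (ep_a e i) (ep_s e (Suc i)))))
     = (\<integral>\<^sup>+a. \<integral>\<^sup>+s'. (\<integral>\<^sup>+e. ennreal (exp (\<Sum>i\<in>{1..Suc k}. G (ep_s ((s0,a) # fst e, snd e) i)
        (ep_a ((s0,a) # fst e, snd e) i) (ep_s ((s0,a) # fst e, snd e) (Suc i)))) \<partial>gen_traj \<mu> P (Suc v) k s')
        \<partial>P s0 a \<partial>\<mu> v s0)"
    by (simp add: case_prod_unfold)
  also have "\<dots> \<le> (\<integral>\<^sup>+a. \<integral>\<^sup>+s'. ennreal (exp (G s0 a s')) \<partial>P s0 a \<partial>\<mu> v s0)"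
    by (intro nn_integral_mono inner)
  also have "\<dots> \<le> (\<integral>\<^sup>+a. 1 \<partial>\<mu> v s0)"
    by (intro nn_integral_mono G)
  also have "\<dots> = 1" by simp
  finally show ?case .
qed

lemma episode_exp:
  fixes P :: "'s \<Rightarrow> 'a \<Rightarrow> 's pmf" and \<mu> :: "nat \<Rightarrow> 's \<Rightarrow> 'a pmf"
  assumes G: "\<And>s a. nn_integral (measure_pmf (P s a)) (\<lambda>s'. ennreal (exp (G s a s'))) \<le> 1"
  shows "nn_integral (episode_pmf d1 \<mu> P H)
     (\<lambda>e. ennreal (exp (\<Sum>i\<in>{1..H}. G (ep_s e i) (ep_a e i) (ep_s e (Suc i))))) \<le> 1"
proof -
  have "nn_integral (episode_pmf d1 \<mu> P H)
     (\<lambda>e. ennreal (exp (\<Sum>i\<in>{1..H}. G (ep_s e i) (ep_a e i) (ep_s e (Suc i)))))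
    = (\<integral>\<^sup>+s. nn_integral (gen_traj \<mu> P 1 H s)
     (\<lambda>e. ennreal (exp (\<Sum>i\<in>{1..H}. G (ep_s e i) (ep_a e i) (ep_s e (Suc i))))) \<partial>d1)"
    by (simp add: episode_pmf_def)
  also have "\<dots> \<le> (\<integral>\<^sup>+s. 1 \<partial>d1)"
    by (intro nn_integral_mono gen_traj_exp G)
  finally show ?thesis by simp
qed

lemma prod_le_one_ennreal:
  fixes f :: "'i \<Rightarrow> ennreal"
  shows "(\<And>i. i \<in> A \<Longrightarrow> f i \<le> 1) \<Longrightarrow> prod f A \<le> 1"
proof (induction A rule: infinite_finite_induct)
  case (insert x F)
  then have "f x * prod f F \<le> 1 * 1" by (intro mult_mono) auto
  then show ?case using insert by simp
qed auto

lemma dataset_exp: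
  fixes P :: "'s \<Rightarrow> 'a \<Rightarrow> 's pmf" and \<mu> :: "nat \<Rightarrow> 's \<Rightarrow> 'a pmf"
  assumes G: "\<And>s a. nn_integral (measure_pmf (P s a)) (\<lambda>s'. ennreal (exp (G s a s'))) \<le> 1"
  shows "nn_integral (dataset_pmf l d1 \<mu> P H) (\<lambda>D. ennreal (exp (\<Sum>j\<in>{1..l}. \<Sum>i\<in>{1..H}.
           G (ep_s (D j) i) (ep_a (D j) i) (ep_s (D j) (Suc i))))) \<le> 1"
proof -
  define W where "W = (\<lambda>(j::nat) e. ennreal (exp (\<Sum>i\<in>{1..H}. G (ep_s e i) (ep_a e i) (ep_s e (Suc i)))))"
  have "nn_integral (dataset_pmf l d1 \<mu> P H) (\<lambda>D. ennreal (exp (\<Sum>j\<in>{1..l}. \<Sum>i\<in>{1..H}.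
           G (ep_s (D j) i) (ep_a (D j) i) (ep_s (D j) (Suc i)))))
      = nn_integral (dataset_pmf l d1 \<mu> P H) (\<lambda>D. \<Prod>j\<in>{1..l}. W j (D j))"
    unfolding W_def by (intro nn_integral_cong, subst prod_ennreal) (auto simp: exp_sum intro: prod_nonneg)
  also have "\<dots> = (\<Prod>j\<in>{1..l}. nn_integral (episode_pmf d1 \<mu> P H) (W j))"
    unfolding dataset_pmf_def by (rule nn_integral_prod_Pi_pmf) simp
  also have "\<dots> \<le> 1"
    by (intro prod_le_one_ennreal) (unfold W_def, rule episode_exp[OF G])
  finally show ?thesis .
qed

lemma step_G:
  fixes p :: "'s pmf" and Y :: "'s \<Rightarrow> real"
  assumes Y: "\<And>x. Y x \<in> {-2*u..2*u}" and lam: "lam \<ge> 0" and sg: "\<sigma> = 1 \<or> \<sigma> = -1"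
  shows "nn_integral p (\<lambda>z. ennreal (exp (lam * \<sigma> * (Y z - measure_pmf.expectation p Y) - 2*lam\<^sup>2*u\<^sup>2))) \<le> 1"
proof (cases "lam = 0")
  case True then show ?thesis by simp
next
  case False
  with lam have lp: "lam > 0" by simp
  define Z where "Z = (\<lambda>x. \<sigma> * Y x)"
  have Zr: "Z x \<in> {-2*u..2*u}" for x using Y[of x] sg by (auto simp: Z_def)
  have EZ: "measure_pmf.expectation p Z = \<sigma> * measure_pmf.expectation p Y"
    unfolding Z_def by simp
  have "nn_integral p (\<lambda>z. ennreal (exp (lam * \<sigma> * (Y z - measure_pmf.expectation p Y) - 2*lam\<^sup>2*u\<^sup>2)))
     = nn_integral p (\<lambda>z. ennreal (exp (- 2*lam\<^sup>2*u\<^sup>2)) * ennreal (exp (lam * (Z z - measure_pmf.expectation p Z))))"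
    by (intro nn_integral_cong) (simp add: EZ Z_def exp_add[symmetric] ennreal_mult[symmetric] algebra_simps)
  also have "\<dots> = ennreal (exp (- 2*lam\<^sup>2*u\<^sup>2)) * nn_integral p (\<lambda>z. ennreal (exp (lam * (Z z - measure_pmf.expectation p Z))))"
    by (rule nn_integral_cmult) simp
  also have "\<dots> \<le> ennreal (exp (- 2*lam\<^sup>2*u\<^sup>2)) * ennreal (exp (lam\<^sup>2 * (2*u - (-2*u))\<^sup>2/8))"
    by (intro mult_left_mono hoeff_step Zr lp) simp
  also have "\<dots> = 1"
    by (simp add: ennreal_mult[symmetric] exp_add[symmetric] power2_eq_square algebra_simps)
  finally show ?thesis .
qed

lemma markov_pmf:
  fixes p :: "'b pmf"
  assumes "\<And>x. x \<in> B \<Longrightarrow> W x \<ge> K" "K > 0" "nn_integral p (\<lambda>x. ennreal (W x)) \<le> 1"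
  shows "measure_pmf.prob p B \<le> 1 / K"
proof -
  have "emeasure (measure_pmf p) B = nn_integral p (indicator B)"
    by simp
  also have "\<dots> \<le> nn_integral p (\<lambda>x. ennreal (1/K) * ennreal (W x))"
  proof (intro nn_integral_mono)
    fix x show "indicator B x \<le> ennreal (1/K) * ennreal (W x)"
    proof (cases "x \<in> B")
      case True
      then have "1 \<le> (1/K) * W x" using assms(1)[OF True] assms(2) by (simp add: field_simps)
      then show ?thesis using True assms(2) by (simp add: ennreal_mult[symmetric] ennreal_ge_1 del: ennreal_mult)
    qed simp
  qed
  also have "\<dots> = ennreal (1/K) * nn_integral p (\<lambda>x. ennreal (W x))"
    by (rule nn_integral_cmult) simp
  also have "\<dots> \<le> ennreal (1/K) * 1"
    by (intro mult_left_mono assms(3)) simp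
  finally have "ennreal (measure_pmf.prob p B) \<le> ennreal (1/K)"
    by (simp add: measure_pmf.emeasure_eq_measure)
  then show ?thesis using assms(2) by (simp add: ennreal_le_iff)
qed

lemma arith1:
  fixes u q F n N lam Z L :: real
  assumes "u > 0" "q \<ge> 0" "F = 4 * u * sqrt q" "Z > F * n" "n > N / 2" "N > 0" "q * N = L"
    and "lam = F / (4 * u\<^sup>2)"
  shows "lam * Z - 2 * lam\<^sup>2 * u\<^sup>2 * n \<ge> L"
proof -
  have F0: "F \<ge> 0" using assms by simp
  have lam0: "lam \<ge> 0" using assms F0 by simp
  have FF: "F\<^sup>2 = 16 * u\<^sup>2 * q" using assms by (simp add: power_mult_distrib)
  have "lam * Z \<ge> lam * (F * n)" using lam0 assms(4) by (intro mult_left_mono) auto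
  moreover have "lam * (F * n) - 2 * lam\<^sup>2 * u\<^sup>2 * n = F\<^sup>2 * n / (8 * u\<^sup>2)"
    using assms(1) unfolding assms(8) by (simp add: field_simps power2_eq_square)
  moreover have "F\<^sup>2 * n / (8 * u\<^sup>2) = 2 * q * n"
    using assms(1) unfolding FF by (simp add: field_simps power2_eq_square)
  moreover have "2 * q * n \<ge> q * N" using assms(2,5) by (metis le_less_linear mult.assoc mult_left_mono less_imp_le
      linorder_not_le mult.commute divide_less_eq_numeral1(1) mult_2_right) 
  ultimately show ?thesis using assms(7) by linarith
qed

theorem lemmaC3:
  fixes d1 :: "'s::finite pmf"
    and \<mu> :: "nat \<Rightarrow> 's \<Rightarrow> 'a::finite pmf"
    and P :: "'s \<Rightarrow> 'a \<Rightarrow> 's pmf"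
    and H t l :: nat
    and u \<delta> :: real
    and V Vin :: "'s \<Rightarrow> real"
  assumes "1 \<le> t" "t \<le> H"
    and "u > 0"
    and "0 < \<delta>" "\<delta> < 1"
    and "\<And>s. \<bar>V s - Vin s\<bar> \<le> 2 * u"
  defines "f \<equiv> \<lambda>s a. 4 * u * sqrt (ln (2 * real H * real CARD('s) * real CARD('a) / \<delta>)
                                   / (real l * occ_total d1 \<mu> P H s a))"
  shows "measure_pmf.prob (dataset_pmf l d1 \<mu> P H)
           {D. \<forall>s a. occ_total d1 \<mu> P H s a > 0 \<longrightarrow>
                 (let g = (if visit_count l H D s a \<le> 1/2 * real l * occ_total d1 \<mu> P H s a
                           then PV_diff P V Vin s a - f s a
                           else (1 / visit_count l H D s a) *
                                  (\<Sum>j\<in>{1..l}. \<Sum>v\<in>{1..H}.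
                                     (if ep_s (D j) v = s \<and> ep_a (D j) v = a
                                      then V (ep_s (D j) (v + 1)) - Vin (ep_s (D j) (v + 1)) else 0))
                                - f s a)
                  in 0 \<le> PV_diff P V Vin s a - g \<and>
                     PV_diff P V Vin s a - g
                       \<le> 8 * u * sqrt (ln (2 * real H * real CARD('s) * real CARD('a) / \<delta>)
                                       / (real l * occ_total d1 \<mu> P H s a)))}
         \<ge> 1 - \<delta> / real H"
proof -
  define K where "K = 2 * real H * real CARD('s) * real CARD('a) / \<delta>"
  define L where "L = ln K"
  have Hpos: "real H \<ge> 1" using assms(1,2) by simp
  have Kgt: "K > 1"
  proof -
    have "2 * real H * real CARD('s) * real CARD('a) \<ge> 2 * 1 * 1 * 1"
      using Hpos by (intro mult_mono) auto
    then show ?thesis unfolding K_def using assms(4,5) by (simp add: field_simps)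
  qed
  have L0: "L \<ge> 0" unfolding L_def using Kgt by simp
  have expL: "exp L = K" unfolding L_def using Kgt by simp
  define Y where "Y = (\<lambda>x. V x - Vin x)"
  have Yb: "Y z \<in> {-2*u..2*u}" for z
  proof -
    have "\<bar>V z - Vin z\<bar> \<le> 2 * u" by (rule assms(6))
    then show ?thesis unfolding Y_def by (simp add: abs_le_iff)
  qed
  define m where "m = (\<lambda>s a. PV_diff P V Vin s a)"
  have m_eq: "m s a = measure_pmf.expectation (P s a) Y" for s a
    unfolding m_def PV_diff_def Y_def ..
  define d where "d = occ_total d1 \<mu> P H"
  define nv where "nv = (\<lambda>(D::nat \<Rightarrow> ('s \<times> 'a) list \<times> 's) (s::'s) (a::'a). visit_count l H D s a)"
  define Z where "Z = (\<lambda>(D::nat \<Rightarrow> ('s \<times> 'a) list \<times> 's) (s::'s) (a::'a). \<Sum>j\<in>{1..l}. \<Sum>v\<in>{1..H}.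
      if ep_s (D j) v = s \<and> ep_a (D j) v = a then Y (ep_s (D j) (Suc v)) - m s a else 0)"
  define Emp where "Emp = (\<lambda>(D::nat \<Rightarrow> ('s \<times> 'a) list \<times> 's) (s::'s) (a::'a). \<Sum>j\<in>{1..l}. \<Sum>v\<in>{1..H}.
      (if ep_s (D j) v = s \<and> ep_a (D j) v = a then V (ep_s (D j) (v + 1)) - Vin (ep_s (D j) (v + 1)) else 0))"
  have ZE: "Z D s a = Emp D s a - m s a * nv D s a" for D s a
  proof -
    have "Z D s a = (\<Sum>j\<in>{1..l}. \<Sum>v\<in>{1..H}.
      (if ep_s (D j) v = s \<and> ep_a (D j) v = a then V (ep_s (D j) (v + 1)) - Vin (ep_s (D j) (v + 1)) else 0)
      - m s a * (if ep_s (D j) v = s \<and> ep_a (D j) v = a then 1 else 0))"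
      unfolding Z_def Y_def by (intro sum.cong refl) auto
    also have "\<dots> = Emp D s a - m s a * nv D s a"
      unfolding Emp_def nv_def visit_count_def
      by (simp add: sum_subtractf sum_distrib_left)
    finally show ?thesis .
  qed
  have nv0: "nv D s a \<ge> 0" for D s a
    unfolding nv_def visit_count_def by (intro sum_nonneg) auto
  have nvl0: "l = 0 \<Longrightarrow> nv D s a = 0" for D s a
    unfolding nv_def visit_count_def by simp
  have f_eq: "f s a = 4 * u * sqrt (L / (real l * d s a))" for s a
    unfolding f_def L_def K_def d_def ..
  have q0: "d s a > 0 \<Longrightarrow> L / (real l * d s a) \<ge> 0" for s a
    using L0 by simp
  define B where "B = (\<lambda>(s, a, \<sigma>::real). {D. d s a > 0 \<and> nv D s a > 1/2 * real l * d s a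
        \<and> \<sigma> * Z D s a > f s a * nv D s a})"
  define I where "I = (UNIV :: 's set) \<times> (UNIV :: 'a set) \<times> {1, -1::real}"
  have probB: "measure_pmf.prob (dataset_pmf l d1 \<mu> P H) (B (s, a, \<sigma>)) \<le> 1 / K"
    if sg: "\<sigma> = 1 \<or> \<sigma> = -1" for s a \<sigma>
  proof (cases "d s a > 0 \<and> l > 0")
    case False
    have "B (s, a, \<sigma>) = {}"
      using False nvl0 unfolding B_def by auto
    then show ?thesis using Kgt by simp
  next
    case True
    define lam where "lam = f s a / (4 * u\<^sup>2)"
    have lam0: "lam \<ge> 0" unfolding lam_def f_eq using assms(3) q0[of s a] True
      by (intro divide_nonneg_nonneg mult_nonneg_nonneg) auto
    define G where "G = (\<lambda>x y z. if x = s \<and> y = a then lam * \<sigma> * (Y z - m s a) - 2 * lam\<^sup>2 * u\<^sup>2 else 0)"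
    have Gstep: "nn_integral (measure_pmf (P x y)) (\<lambda>z. ennreal (exp (G x y z))) \<le> 1" for x y
    proof (cases "x = s \<and> y = a")
      case True
      then show ?thesis unfolding G_def m_eq using True
        by (auto intro!: step_G lam0 sg Yb)
    next
      case False
      then have "(\<lambda>z. ennreal (exp (G x y z))) = (\<lambda>z. 1)" unfolding G_def by auto
      then show ?thesis by simp
    qed
    have dexp: "nn_integral (dataset_pmf l d1 \<mu> P H) (\<lambda>D. ennreal (exp (\<Sum>j\<in>{1..l}. \<Sum>i\<in>{1..H}.
           G (ep_s (D j) i) (ep_a (D j) i) (ep_s (D j) (Suc i))))) \<le> 1"
      by (rule dataset_exp[OF Gstep])
    have sumG: "(\<Sum>j\<in>{1..l}. \<Sum>i\<in>{1..H}. G (ep_s (D j) i) (ep_a (D j) i) (ep_s (D j) (Suc i)))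
        = lam * (\<sigma> * Z D s a) - 2 * lam\<^sup>2 * u\<^sup>2 * nv D s a" for D
    proof -
      have "(\<Sum>j\<in>{1..l}. \<Sum>i\<in>{1..H}. G (ep_s (D j) i) (ep_a (D j) i) (ep_s (D j) (Suc i)))
        = (\<Sum>j\<in>{1..l}. \<Sum>i\<in>{1..H}. lam * \<sigma> * (if ep_s (D j) i = s \<and> ep_a (D j) i = a then Y (ep_s (D j) (Suc i)) - m s a else 0)
            - 2 * lam\<^sup>2 * u\<^sup>2 * (if ep_s (D j) i = s \<and> ep_a (D j) i = a then 1 else 0))"
        unfolding G_def by (intro sum.cong refl) auto
      also have "\<dots> = lam * (\<sigma> * Z D s a) - 2 * lam\<^sup>2 * u\<^sup>2 * nv D s a"
        unfolding Z_def nv_def visit_count_def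
        by (simp add: sum_subtractf sum_distrib_left mult.assoc)
      finally show ?thesis .
    qed
    show ?thesis
    proof (rule markov_pmf[OF _ _ dexp])
      show "K > 0" using Kgt by simp
    next
      fix D assume D: "D \<in> B (s, a, \<sigma>)"
      have "L \<le> lam * (\<sigma> * Z D s a) - 2 * lam\<^sup>2 * u\<^sup>2 * nv D s a"
      proof (rule arith1[OF assms(3) q0 f_eq])
        show "0 < d s a" using True by simp
        show "\<sigma> * Z D s a > f s a * nv D s a" using D unfolding B_def by simp
        show "nv D s a > real l * d s a / 2" using D unfolding B_def by simp
        show "real l * d s a > 0" using True by simp
        show "L / (real l * d s a) * (real l * d s a) = L" using True by simp
        show "lam = f s a / (4 * u\<^sup>2)" by (rule lam_def)
      qed
      then have "exp L \<le> exp (lam * (\<sigma> * Z D s a) - 2 * lam\<^sup>2 * u\<^sup>2 * nv D s a)" by simp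
      then show "K \<le> exp (\<Sum>j\<in>{1..l}. \<Sum>i\<in>{1..H}. G (ep_s (D j) i) (ep_a (D j) i) (ep_s (D j) (Suc i)))"
        unfolding sumG expL .
    qed
  qed
  have good: "D \<in> {D. \<forall>s a. occ_total d1 \<mu> P H s a > 0 \<longrightarrow>
                 (let g = (if visit_count l H D s a \<le> 1/2 * real l * occ_total d1 \<mu> P H s a
                           then PV_diff P V Vin s a - f s a
                           else (1 / visit_count l H D s a) *
                                  (\<Sum>j\<in>{1..l}. \<Sum>v\<in>{1..H}.
                                     (if ep_s (D j) v = s \<and> ep_a (D j) v = a
                                      then V (ep_s (D j) (v + 1)) - Vin (ep_s (D j) (v + 1)) else 0))
                                - f s a)
                  in 0 \<le> PV_diff P V Vin s a - g \<and>
                     PV_diff P V Vin s a - g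
                       \<le> 8 * u * sqrt (ln (2 * real H * real CARD('s) * real CARD('a) / \<delta>)
                                       / (real l * occ_total d1 \<mu> P H s a)))}"
    if D: "D \<notin> (\<Union>i\<in>I. B i)" for D
  proof (intro CollectI allI impI)
    fix s a assume ds: "occ_total d1 \<mu> P H s a > 0"
    have F0: "f s a \<ge> 0" unfolding f_eq using q0[of s a] ds assms(3) by (simp add: d_def)
    have F8: "8 * u * sqrt (ln (2 * real H * real CARD('s) * real CARD('a) / \<delta>)
                                       / (real l * occ_total d1 \<mu> P H s a)) = 2 * f s a"
      unfolding f_eq L_def K_def d_def by simp
    show "let g = (if visit_count l H D s a \<le> 1/2 * real l * occ_total d1 \<mu> P H s a
                           then PV_diff P V Vin s a - f s a
                           else (1 / visit_count l H D s a) *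
                                  (\<Sum>j\<in>{1..l}. \<Sum>v\<in>{1..H}.
                                     (if ep_s (D j) v = s \<and> ep_a (D j) v = a
                                      then V (ep_s (D j) (v + 1)) - Vin (ep_s (D j) (v + 1)) else 0))
                                - f s a)
                  in 0 \<le> PV_diff P V Vin s a - g \<and>
                     PV_diff P V Vin s a - g
                       \<le> 8 * u * sqrt (ln (2 * real H * real CARD('s) * real CARD('a) / \<delta>)
                                       / (real l * occ_total d1 \<mu> P H s a))"
    proof (cases "visit_count l H D s a \<le> 1/2 * real l * occ_total d1 \<mu> P H s a")
      case True
      then show ?thesis unfolding Let_def F8 using F0 by simp
    next
      case False
      have big: "nv D s a > 1/2 * real l * d s a" using False unfolding nv_def d_def by linarith
      have h0: "1/2 * real l * d s a \<ge> 0" using ds unfolding d_def by simp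
      have npos: "nv D s a > 0" using big h0 by linarith
      have I1: "(s, a, 1) \<in> I" "(s, a, -1) \<in> I" unfolding I_def by auto
      have "D \<notin> B (s, a, 1)" using D I1 by blast
      then have n1: "\<not> (Z D s a > f s a * nv D s a)"
        using ds big unfolding B_def d_def by simp
      have "D \<notin> B (s, a, -1)" using D I1 by blast
      then have n2: "\<not> (- Z D s a > f s a * nv D s a)"
        using ds big unfolding B_def d_def by simp
      have "\<bar>Z D s a\<bar> \<le> f s a * nv D s a" using n1 n2 by linarith
      then have ab: "\<bar>Z D s a / nv D s a\<bar> \<le> f s a"
        using npos by (simp add: pos_divide_le_eq)
      have gval: "PV_diff P V Vin s a - ((1 / nv D s a) * Emp D s a - f s a) = f s a - Z D s a / nv D s a"
        using npos unfolding ZE m_def by (simp add: field_simps)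
      note gval' = gval[unfolded nv_def Emp_def]
      have ab2: "Z D s a / visit_count l H D s a \<le> f s a" "- (Z D s a / visit_count l H D s a) \<le> f s a"
        using ab unfolding nv_def abs_le_iff by linarith+
      show ?thesis unfolding Let_def F8 if_not_P[OF False] gval'
        using ab2 F0 by (intro conjI; linarith)
    qed
  qed
  let ?p = "dataset_pmf l d1 \<mu> P H"
  have "measure_pmf.prob ?p (\<Union>i\<in>I. B i) \<le> (\<Sum>i\<in>I. measure_pmf.prob ?p (B i))"
    by (rule measure_pmf.finite_measure_subadditive_finite) (auto simp: I_def)
  also have "\<dots> \<le> (\<Sum>i\<in>I. 1 / K)"
    by (intro sum_mono) (auto simp: I_def intro!: probB)
  also have "\<dots> = real (card I) / K" by simp
  also have "card I = CARD('s) * CARD('a) * 2"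
    unfolding I_def by (simp add: card_cartesian_product)
  also have "real (CARD('s) * CARD('a) * 2) / K = \<delta> / real H"
    unfolding K_def using assms(4) Hpos by (simp add: field_simps)
  finally have pU: "measure_pmf.prob ?p (\<Union>i\<in>I. B i) \<le> \<delta> / real H" .
  have "1 - \<delta> / real H \<le> 1 - measure_pmf.prob ?p (\<Union>i\<in>I. B i)" using pU by simp
  also have "\<dots> = measure_pmf.prob ?p (UNIV - (\<Union>i\<in>I. B i))"
    using measure_pmf.prob_compl[of "\<Union>i\<in>I. B i" ?p] by simp
  also have "\<dots> \<le> measure_pmf.prob ?p {D. \<forall>s a. occ_total d1 \<mu> P H s a > 0 \<longrightarrow>
                 (let g = (if visit_count l H D s a \<le> 1/2 * real l * occ_total d1 \<mu> P H s a
                           then PV_diff P V Vin s a - f s a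
                           else (1 / visit_count l H D s a) *
                                  (\<Sum>j\<in>{1..l}. \<Sum>v\<in>{1..H}.
                                     (if ep_s (D j) v = s \<and> ep_a (D j) v = a
                                      then V (ep_s (D j) (v + 1)) - Vin (ep_s (D j) (v + 1)) else 0))
                                - f s a)
                  in 0 \<le> PV_diff P V Vin s a - g \<and>
                     PV_diff P V Vin s a - g
                       \<le> 8 * u * sqrt (ln (2 * real H * real CARD('s) * real CARD('a) / \<delta>)
                                       / (real l * occ_total d1 \<mu> P H s a)))}"
    by (intro measure_pmf.finite_measure_mono subsetI good) auto
  finally show ?thesis .
qed

end
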